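(* Suppose a graph $G$ has $k$ connected components $C_1,\dots,C_k$, all of size $n_0$. Let $G_{C_1},\dots,G_{C_k}$ be the subgraphs on these components and $L^i$ their random walk Laplacians, and let $L_G$ be the random walk Laplacian of $G$. Then for any $s<n_0$, $\delta_s(L_G)=\max_i\delta_s(L^i)$.
   Context: Random walk Laplacian $L=I-D^{-1}A$ with $A$ adjacency matrix and $D$ degree matrix. The restricted isometry constant $\delta_s(\Phi)$ is the smallest $\delta\ge0$ with $(1-\delta)\|x\|_2^2\le\|\Phi_Tx\|_2^2\le(1+\delta)\|x\|_2^2$ for all index sets $T$ with $|T|\le s$ and all $x$, where $\Phi_T$ is the column submatrix indexed by $T$. *)

theory Defs
  imports Main "HOL-Library.Disjoint_Sets" Complex_Main
begin

definition graph :: "'v set \<Rightarrow> ('v \<Rightarrow> 'v \<Rightarrow> bool) \<Rightarrow> bool" where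
  "graph V E \<longleftrightarrow> finite V \<and> (\<forall>a b. E a b \<longrightarrow> a \<in> V \<and> b \<in> V)
     \<and> (\<forall>a b. E a b \<longrightarrow> E b a) \<and> (\<forall>a. \<not> E a a)"

definition reach :: "'v set \<Rightarrow> ('v \<Rightarrow> 'v \<Rightarrow> bool) \<Rightarrow> 'v \<Rightarrow> 'v \<Rightarrow> bool" where
  "reach V E = (\<lambda>a b. E a b \<and> a \<in> V \<and> b \<in> V)\<^sup>*\<^sup>*"

definition conn_components :: "'v set \<Rightarrow> ('v \<Rightarrow> 'v \<Rightarrow> bool) \<Rightarrow> 'v set set" where
  "conn_components V E = (\<lambda>v. {w \<in> V. reach V E v w}) ` V"

definition degree :: "'v set \<Rightarrow> ('v \<Rightarrow> 'v \<Rightarrow> bool) \<Rightarrow> 'v \<Rightarrow> nat" where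
  "degree V E v = card {w \<in> V. E v w}"

text \<open>Random walk Laplacian L = I - D^{-1} A of the subgraph induced on V,
as a matrix indexed by V x V (values outside V irrelevant).\<close>

definition adj :: "('v \<Rightarrow> 'v \<Rightarrow> bool) \<Rightarrow> 'v \<Rightarrow> 'v \<Rightarrow> real" where
  "adj E i j = (if E i j then 1 else 0)"

definition rw_laplacian :: "'v set \<Rightarrow> ('v \<Rightarrow> 'v \<Rightarrow> bool) \<Rightarrow> 'v \<Rightarrow> 'v \<Rightarrow> real" where
  "rw_laplacian V E i j =
     (if i = j then 1 else 0) - inverse (real (degree V E i)) * adj E i j"

definition rip_holds :: "'r set \<Rightarrow> 'c set \<Rightarrow> ('r \<Rightarrow> 'c \<Rightarrow> real) \<Rightarrow> nat \<Rightarrow> real \<Rightarrow> bool" where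
  "rip_holds R C Phi s \<delta> \<longleftrightarrow>
     (\<forall>T x. T \<subseteq> C \<and> card T \<le> s \<longrightarrow>
        (1 - \<delta>) * (\<Sum>j\<in>T. (x j)\<^sup>2) \<le> (\<Sum>i\<in>R. (\<Sum>j\<in>T. Phi i j * x j)\<^sup>2) \<and>
        (\<Sum>i\<in>R. (\<Sum>j\<in>T. Phi i j * x j)\<^sup>2) \<le> (1 + \<delta>) * (\<Sum>j\<in>T. (x j)\<^sup>2))"

definition rip_const :: "'r set \<Rightarrow> 'c set \<Rightarrow> ('r \<Rightarrow> 'c \<Rightarrow> real) \<Rightarrow> nat \<Rightarrow> real" where
  "rip_const R C Phi s = Inf {\<delta>. \<delta> \<ge> 0 \<and> rip_holds R C Phi s \<delta>}"

end

theory Submission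
  imports Defs "HOL-Analysis.Convex"
begin

lemma rip_mono:
  assumes "rip_holds R C Phi s d" "d \<le> d'"
  shows "rip_holds R C Phi s d'"
proof -
  have "\<And>T x. (\<Sum>j\<in>T. (x j)\<^sup>2) \<ge> (0::real)" by (rule sum_nonneg) simp
  then show ?thesis using assms unfolding rip_holds_def
    by (smt (verit, best) mult_right_mono)
qed

lemma rip_exists:
  assumes "finite R" "finite C"
  shows "\<exists>d\<ge>0. rip_holds R C Phi s d"
proof -
  define B where "B = (\<Sum>i\<in>R. \<Sum>j\<in>C. (Phi i j)\<^sup>2)"
  have B0: "B \<ge> 0" unfolding B_def by (intro sum_nonneg) simp
  have "rip_holds R C Phi s (1 + B)"
    unfolding rip_holds_def
  proof (intro allI impI conjI)
    fix T and x :: "'b \<Rightarrow> real" assume T: "T \<subseteq> C \<and> card T \<le> s"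
    have n0: "(\<Sum>j\<in>T. (x j)\<^sup>2) \<ge> (0::real)" by (rule sum_nonneg) simp
    have r0: "(\<Sum>i\<in>R. (\<Sum>j\<in>T. Phi i j * x j)\<^sup>2) \<ge> 0" by (rule sum_nonneg) simp
    show "(1 - (1 + B)) * (\<Sum>j\<in>T. (x j)\<^sup>2) \<le> (\<Sum>i\<in>R. (\<Sum>j\<in>T. Phi i j * x j)\<^sup>2)"
    proof -
      have p: "B * (\<Sum>j\<in>T. (x j)\<^sup>2) \<ge> 0" by (rule mult_nonneg_nonneg[OF B0 n0])
      show ?thesis using p r0 by (simp add: algebra_simps)
    qed
    have "(\<Sum>i\<in>R. (\<Sum>j\<in>T. Phi i j * x j)\<^sup>2) \<le> (\<Sum>i\<in>R. (\<Sum>j\<in>C. (Phi i j)\<^sup>2) * (\<Sum>j\<in>T. (x j)\<^sup>2))"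
    proof (rule sum_mono)
      fix i assume "i \<in> R"
      have "(\<Sum>j\<in>T. Phi i j * x j)\<^sup>2 \<le> (\<Sum>j\<in>T. (Phi i j)\<^sup>2) * (\<Sum>j\<in>T. (x j)\<^sup>2)"
        by (rule Cauchy_Schwarz_ineq_sum)
      also have "\<dots> \<le> (\<Sum>j\<in>C. (Phi i j)\<^sup>2) * (\<Sum>j\<in>T. (x j)\<^sup>2)"
        by (rule mult_right_mono[OF sum_mono2[OF assms(2)]]) (use T n0 in auto)
      finally show "(\<Sum>j\<in>T. Phi i j * x j)\<^sup>2 \<le> (\<Sum>j\<in>C. (Phi i j)\<^sup>2) * (\<Sum>j\<in>T. (x j)\<^sup>2)" .
    qed
    also have "\<dots> = B * (\<Sum>j\<in>T. (x j)\<^sup>2)" unfolding B_def by (simp add: sum_distrib_right)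
    also have "\<dots> \<le> (1 + (1 + B)) * (\<Sum>j\<in>T. (x j)\<^sup>2)"
      using n0 B0 by (intro mult_right_mono) auto
    finally show "(\<Sum>i\<in>R. (\<Sum>j\<in>T. Phi i j * x j)\<^sup>2) \<le> (1 + (1 + B)) * (\<Sum>j\<in>T. (x j)\<^sup>2)" .
  qed
  then show ?thesis using B0 by (intro exI[of _ "1+B"]) auto
qed

lemma inf_inter_max:
  fixes S :: "'c \<Rightarrow> real set" and I :: "'c set"
  assumes fin: "finite I" and ne: "I \<noteq> {}"
    and Sne: "\<And>i. i \<in> I \<Longrightarrow> S i \<noteq> {}"
    and Sbd: "\<And>i d. i \<in> I \<Longrightarrow> d \<in> S i \<Longrightarrow> d \<ge> 0"
    and Sup: "\<And>i d d'. i \<in> I \<Longrightarrow> d \<in> S i \<Longrightarrow> d \<le> d' \<Longrightarrow> d' \<in> S i"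
    and G: "G = {d. \<forall>i\<in>I. d \<in> S i}"
  shows "Inf G = Max ((\<lambda>i. Inf (S i)) ` I)"
proof -
  define M where "M = Max ((\<lambda>i. Inf (S i)) ` I)"
  have bdd: "\<And>i. i \<in> I \<Longrightarrow> bdd_below (S i)" using Sbd by (meson bdd_below.I)
  have MI: "\<And>i. i \<in> I \<Longrightarrow> Inf (S i) \<le> M" unfolding M_def using fin by auto
  have eps: "M + e \<in> G" if "e > 0" for e
    unfolding G
  proof (intro CollectI ballI)
    fix i assume i: "i \<in> I"
    have "Inf (S i) < Inf (S i) + e" using that by simp
    then obtain d where "d \<in> S i" "d < Inf (S i) + e"
      using cInf_less_iff[OF Sne[OF i] bdd[OF i]] by blast
    then show "M + e \<in> S i" using Sup[OF i] MI[OF i] by (smt (verit))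
  qed
  have Gne: "G \<noteq> {}" using eps[of 1] by auto
  have Gbd: "bdd_below G" using ne Sbd unfolding G by (auto intro!: bdd_belowI)
  have ge: "Inf (S i) \<le> Inf G" if i: "i \<in> I" for i
    by (rule cInf_superset_mono[OF Gne bdd[OF i]]) (use i G in auto)
  obtain i0 where i0: "i0 \<in> I" "Inf (S i0) = M" unfolding M_def
    using fin ne by (metis (no_types, lifting) Max_in finite_imageI image_iff image_is_empty)
  have "Inf G \<ge> M" using ge i0 by auto
  moreover have "Inf G \<le> M + e" if "e > 0" for e
    using cInf_lower[OF eps[OF that] Gbd] .
  ultimately have "Inf G = M"
    by (meson field_le_epsilon order_antisym)
  then show ?thesis unfolding M_def .
qed


lemma reach_mem: "reach V E a b \<Longrightarrow> a \<in> V \<Longrightarrow> b \<in> V"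
  unfolding reach_def by (induction rule: rtranclp_induct) auto

lemma reach_sym:
  assumes g: "graph V E" and r: "reach V E a b"
  shows "reach V E b a"
proof -
  have eq: "(\<lambda>a b. E a b \<and> a \<in> V \<and> b \<in> V)\<inverse>\<inverse> = (\<lambda>a b. E a b \<and> a \<in> V \<and> b \<in> V)"
    using g unfolding graph_def by (auto intro!: ext)
  show ?thesis using rtranclp_converseI[of "\<lambda>a b. E a b \<and> a \<in> V \<and> b \<in> V" a b] r
    unfolding reach_def eq by simp
qed

lemma reach_trans: "reach V E a b \<Longrightarrow> reach V E b c \<Longrightarrow> reach V E a c"
  unfolding reach_def by (rule rtranclp_trans)

lemma reach_edge:
  assumes g: "graph V E" and r: "reach V E a b" and e: "E b c"
  shows "reach V E a c"
proof -
  have "b \<in> V" "c \<in> V" using g e unfolding graph_def by auto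
  then show ?thesis using r e unfolding reach_def
    by (simp add: rtranclp.rtrancl_into_rtrancl)
qed

lemma comp_sub: "C \<in> conn_components V E \<Longrightarrow> C \<subseteq> V"
  unfolding conn_components_def by auto

lemma comp_class:
  assumes g: "graph V E" and C: "C \<in> conn_components V E" and i: "i \<in> C"
  shows "C = {w \<in> V. reach V E i w}"
proof -
  obtain v where v: "v \<in> V" "C = {w \<in> V. reach V E v w}"
    using C unfolding conn_components_def by auto
  have vi: "reach V E v i" using i v by auto
  have iv: "reach V E i v" using reach_sym[OF g vi] .
  show ?thesis using v vi iv reach_trans[of V E v i] reach_trans[of V E i v] by blast
qed

lemma comp_edge:
  assumes g: "graph V E" and C: "C \<in> conn_components V E" and i: "i \<in> C" and e: "E i j"
  shows "j \<in> C"
proof -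
  obtain v where v: "v \<in> V" "C = {w \<in> V. reach V E v w}"
    using C unfolding conn_components_def by auto
  have "j \<in> V" using g e unfolding graph_def by auto
  then show ?thesis using v i reach_edge[OF g _ e] by auto
qed

lemma comp_edge2:
  assumes g: "graph V E" and C: "C \<in> conn_components V E" and j: "j \<in> C" and e: "E i j"
  shows "i \<in> C"
  using comp_edge[OF g C j] e g unfolding graph_def by auto

lemma comp_union: "\<Union>(conn_components V E) = V"
  unfolding conn_components_def reach_def by auto

lemma comp_disj:
  assumes g: "graph V E" and C: "C \<in> conn_components V E" and C': "C' \<in> conn_components V E"
    and ne: "C \<noteq> C'"
  shows "C \<inter> C' = {}"
proof (rule ccontr)
  assume "C \<inter> C' \<noteq> {}"
  then obtain w where "w \<in> C" "w \<in> C'" by auto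
  then show False using comp_class[OF g C] comp_class[OF g C'] ne by metis
qed

lemma comp_degree:
  assumes g: "graph V E" and C: "C \<in> conn_components V E" and i: "i \<in> C"
  shows "degree V E i = degree C E i"
proof -
  have "{w \<in> V. E i w} = {w \<in> C. E i w}"
    using comp_edge[OF g C i] comp_sub[OF C] by auto
  then show ?thesis unfolding degree_def by simp
qed

lemma lap_in:
  assumes g: "graph V E" and C: "C \<in> conn_components V E" and i: "i \<in> C"
  shows "rw_laplacian V E i j = (if j \<in> C then rw_laplacian C E i j else 0)"
  using comp_degree[OF g C i] comp_edge[OF g C i] i
  unfolding rw_laplacian_def adj_def by auto

lemma lap_out:
  assumes g: "graph V E" and C: "C \<in> conn_components V E" and i: "i \<notin> C" and j: "j \<in> C"
  shows "rw_laplacian V E i j = 0"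
  using comp_edge2[OF g C j, of i] i j
  unfolding rw_laplacian_def adj_def by auto

lemma rip_decomp:
  assumes g: "graph V E"
  shows "rip_holds V V (rw_laplacian V E) s d \<longleftrightarrow>
         (\<forall>C\<in>conn_components V E. rip_holds C C (rw_laplacian C E) s d)"
proof
  assume H: "rip_holds V V (rw_laplacian V E) s d"
  show "\<forall>C\<in>conn_components V E. rip_holds C C (rw_laplacian C E) s d"
  proof (intro ballI)
    fix C assume C: "C \<in> conn_components V E"
    have finV: "finite V" using g unfolding graph_def by auto
    show "rip_holds C C (rw_laplacian C E) s d"
      unfolding rip_holds_def
    proof (intro allI impI)
      fix T and x :: "'a \<Rightarrow> real" assume T: "T \<subseteq> C \<and> card T \<le> s"
      have TV: "T \<subseteq> V \<and> card T \<le> s" using T comp_sub[OF C] by auto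
      have eq: "(\<Sum>i\<in>V. (\<Sum>j\<in>T. rw_laplacian V E i j * x j)\<^sup>2)
           = (\<Sum>i\<in>C. (\<Sum>j\<in>T. rw_laplacian C E i j * x j)\<^sup>2)"
      proof -
        have "(\<Sum>i\<in>V. (\<Sum>j\<in>T. rw_laplacian V E i j * x j)\<^sup>2)
            = (\<Sum>i\<in>C. (\<Sum>j\<in>T. rw_laplacian V E i j * x j)\<^sup>2)"
          by (rule sum.mono_neutral_right[OF finV comp_sub[OF C]])
             (use lap_out[OF g C] T in \<open>auto intro!: sum.neutral\<close>)
        also have "\<dots> = (\<Sum>i\<in>C. (\<Sum>j\<in>T. rw_laplacian C E i j * x j)\<^sup>2)"
          by (intro sum.cong refl arg_cong[where f="\<lambda>t. t\<^sup>2"]) (use lap_in[OF g C] T in auto)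
        finally show ?thesis .
      qed
      show "(1 - d) * (\<Sum>j\<in>T. (x j)\<^sup>2) \<le> (\<Sum>i\<in>C. (\<Sum>j\<in>T. rw_laplacian C E i j * x j)\<^sup>2) \<and>
        (\<Sum>i\<in>C. (\<Sum>j\<in>T. rw_laplacian C E i j * x j)\<^sup>2) \<le> (1 + d) * (\<Sum>j\<in>T. (x j)\<^sup>2)"
        using H TV unfolding rip_holds_def eq[symmetric] by blast
    qed
  qed
next
  assume H: "\<forall>C\<in>conn_components V E. rip_holds C C (rw_laplacian C E) s d"
  have finV: "finite V" using g unfolding graph_def by auto
  define CC where "CC = conn_components V E"
  have finCC: "finite CC" unfolding CC_def conn_components_def using finV by simp
  have disj: "\<forall>C\<in>CC. \<forall>C'\<in>CC. C \<noteq> C' \<longrightarrow> C \<inter> C' = {}"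
    unfolding CC_def using comp_disj[OF g] by blast
  have finCCs: "\<forall>C\<in>CC. finite C"
    unfolding CC_def using comp_sub[of _ V E] finite_subset finV by blast
  show "rip_holds V V (rw_laplacian V E) s d"
    unfolding rip_holds_def
  proof (intro allI impI)
    fix T and x :: "'a \<Rightarrow> real" assume T: "T \<subseteq> V \<and> card T \<le> s"
    have finT: "finite T" using T finV finite_subset by auto
    have TU: "T = \<Union>((\<lambda>C. T \<inter> C) ` CC)" using T comp_union[of V E] unfolding CC_def by auto
    have VU: "V = \<Union>((\<lambda>C. C) ` CC)" using comp_union[of V E] unfolding CC_def by auto
    have nx: "(\<Sum>j\<in>T. (x j)\<^sup>2) = (\<Sum>C\<in>CC. \<Sum>j\<in>T \<inter> C. (x j)\<^sup>2)"
      by (subst TU, rule sum.UNION_disjoint[OF finCC]) (use finT disj in auto)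
    have ny: "(\<Sum>i\<in>V. (\<Sum>j\<in>T. rw_laplacian V E i j * x j)\<^sup>2)
       = (\<Sum>C\<in>CC. \<Sum>i\<in>C. (\<Sum>j\<in>T \<inter> C. rw_laplacian C E i j * x j)\<^sup>2)"
    proof -
      have "(\<Sum>i\<in>V. (\<Sum>j\<in>T. rw_laplacian V E i j * x j)\<^sup>2)
         = (\<Sum>C\<in>CC. \<Sum>i\<in>C. (\<Sum>j\<in>T. rw_laplacian V E i j * x j)\<^sup>2)"
        by (subst VU, rule sum.UNION_disjoint[OF finCC])
           (use disj finCCs in auto)
      also have "\<dots> = (\<Sum>C\<in>CC. \<Sum>i\<in>C. (\<Sum>j\<in>T \<inter> C. rw_laplacian C E i j * x j)\<^sup>2)"
      proof (rule sum.cong[OF refl], rule sum.cong[OF refl])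
        fix C i assume C: "C \<in> CC" and i: "i \<in> C"
        have C': "C \<in> conn_components V E" using C unfolding CC_def .
        have "(\<Sum>j\<in>T. rw_laplacian V E i j * x j) = (\<Sum>j\<in>T \<inter> C. rw_laplacian V E i j * x j)"
          by (rule sum.mono_neutral_right[OF finT]) (use lap_in[OF g C' i] in auto)
        also have "\<dots> = (\<Sum>j\<in>T \<inter> C. rw_laplacian C E i j * x j)"
          by (rule sum.cong) (use lap_in[OF g C' i] in auto)
        finally show "(\<Sum>j\<in>T. rw_laplacian V E i j * x j)\<^sup>2 = (\<Sum>j\<in>T \<inter> C. rw_laplacian C E i j * x j)\<^sup>2" by simp
      qed
      finally show ?thesis .
    qed
    have each: "(1 - d) * (\<Sum>j\<in>T \<inter> C. (x j)\<^sup>2) \<le> (\<Sum>i\<in>C. (\<Sum>j\<in>T \<inter> C. rw_laplacian C E i j * x j)\<^sup>2) \<and>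
        (\<Sum>i\<in>C. (\<Sum>j\<in>T \<inter> C. rw_laplacian C E i j * x j)\<^sup>2) \<le> (1 + d) * (\<Sum>j\<in>T \<inter> C. (x j)\<^sup>2)"
      if C: "C \<in> CC" for C
    proof -
      have "card (T \<inter> C) \<le> card T" using finT by (intro card_mono) auto
      then have "T \<inter> C \<subseteq> C \<and> card (T \<inter> C) \<le> s" using T by auto
      then show ?thesis using H C unfolding CC_def rip_holds_def by blast
    qed
    show "(1 - d) * (\<Sum>j\<in>T. (x j)\<^sup>2) \<le> (\<Sum>i\<in>V. (\<Sum>j\<in>T. rw_laplacian V E i j * x j)\<^sup>2) \<and>
        (\<Sum>i\<in>V. (\<Sum>j\<in>T. rw_laplacian V E i j * x j)\<^sup>2) \<le> (1 + d) * (\<Sum>j\<in>T. (x j)\<^sup>2)"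
    proof
      have "(1 - d) * (\<Sum>j\<in>T. (x j)\<^sup>2) = (\<Sum>C\<in>CC. (1 - d) * (\<Sum>j\<in>T \<inter> C. (x j)\<^sup>2))"
        unfolding nx by (rule sum_distrib_left)
      also have "\<dots> \<le> (\<Sum>C\<in>CC. \<Sum>i\<in>C. (\<Sum>j\<in>T \<inter> C. rw_laplacian C E i j * x j)\<^sup>2)"
        by (rule sum_mono) (use each in blast)
      finally show "(1 - d) * (\<Sum>j\<in>T. (x j)\<^sup>2) \<le> (\<Sum>i\<in>V. (\<Sum>j\<in>T. rw_laplacian V E i j * x j)\<^sup>2)"
        unfolding ny .
    next
      have "(\<Sum>C\<in>CC. \<Sum>i\<in>C. (\<Sum>j\<in>T \<inter> C. rw_laplacian C E i j * x j)\<^sup>2)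
          \<le> (\<Sum>C\<in>CC. (1 + d) * (\<Sum>j\<in>T \<inter> C. (x j)\<^sup>2))"
        by (rule sum_mono) (use each in blast)
      also have "\<dots> = (1 + d) * (\<Sum>j\<in>T. (x j)\<^sup>2)"
        unfolding nx by (rule sum_distrib_left[symmetric])
      finally show "(\<Sum>i\<in>V. (\<Sum>j\<in>T. rw_laplacian V E i j * x j)\<^sup>2) \<le> (1 + d) * (\<Sum>j\<in>T. (x j)\<^sup>2)"
        unfolding ny .
    qed
  qed
qed

theorem mainTheorem8:
  fixes V :: "'v set" and E :: "'v \<Rightarrow> 'v \<Rightarrow> bool" and k n0 s :: nat
  assumes "graph V E"
    and "card (conn_components V E) = k" and "k \<ge> 1"
    and "\<forall>C\<in>conn_components V E. card C = n0"
    and "s < n0"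
  shows "rip_const V V (rw_laplacian V E) s
           = Max ((\<lambda>C. rip_const C C (rw_laplacian C E) s) ` conn_components V E)"
proof -
  have g: "graph V E" by fact
  have finV: "finite V" using g unfolding graph_def by auto
  have fin: "finite (conn_components V E)" unfolding conn_components_def using finV by simp
  have ne: "conn_components V E \<noteq> {}" using assms(2,3) by auto
  show ?thesis unfolding rip_const_def
  proof (rule inf_inter_max[OF fin ne])
    fix C assume C: "C \<in> conn_components V E"
    have "finite C" using finite_subset[OF comp_sub[OF C] finV] .
    then show "{\<delta>. 0 \<le> \<delta> \<and> rip_holds C C (rw_laplacian C E) s \<delta>} \<noteq> {}"
      using rip_exists[of C C "rw_laplacian C E" s] by auto
  next
    fix C d assume "d \<in> {\<delta>. 0 \<le> \<delta> \<and> rip_holds C C (rw_laplacian C E) s \<delta>}"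
    then show "0 \<le> d" by auto
  next
    fix C d d' assume "d \<in> {\<delta>. 0 \<le> \<delta> \<and> rip_holds C C (rw_laplacian C E) s \<delta>}" "d \<le> d'"
    then show "d' \<in> {\<delta>. 0 \<le> \<delta> \<and> rip_holds C C (rw_laplacian C E) s \<delta>}"
      using rip_mono by auto
  next
    show "{\<delta>. 0 \<le> \<delta> \<and> rip_holds V V (rw_laplacian V E) s \<delta>} =
      {d. \<forall>C\<in>conn_components V E. d \<in> {\<delta>. 0 \<le> \<delta> \<and> rip_holds C C (rw_laplacian C E) s \<delta>}}"
      using rip_decomp[OF g] ne by auto
  qed
qed

end
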